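(* Let $x_*$ be a feasible point of problem $(\mathcal{P})$. If $$\max_{\omega\in W(x_* )}\langle\nabla_x f(x_*,\omega),h\rangle>0\quad\text{for all } h\in T_A(x_* )\setminus\{0\}\text{ with } DG(x_* )h\in T_K(G(x_* )),\qquad(\ast)$$ then the first order growth condition holds at $x_*$. Conversely, if the first order growth condition and Robinson's constraint qualification hold at $x_*$, then $(\ast)$ is valid.
   Context: Standing setting: $A\subseteq\mathbb{R}^d$ is a nonempty closed convex set; $Y$ is a real Banach space with dual $Y^*$ and pairing $\langle\cdot,\cdot\rangle$ (also the Euclidean inner product on $\mathbb{R}^d$, with Euclidean norm $|\cdot|$); $K\subset Y$ is a nonempty closed convex cone; $W$ is a compact Hausdorff space; $f:\mathbb{R}^d\times W\to\mathbb{R}$ is differentiable in $x$ for each $\omega$, with $f$ and $\nabla_xf$ jointly continuous; $G:\mathbb{R}^d\to Y$ is continuously Fréchet differentiable. $F(x)=\max_{\omega\in W}f(x,\omega)$, $W(x)=\{\omega: f(x,\omega)=F(x)\}$. Problem $(\mathcal{P})$: minimise $F(x)$ subject to $G(x)\in K$, $x\in A$; its feasible set is $\Omega=\{x\in A:G(x)\in K\}$. The contingent cone $T_C(x)$ to $C$ at $x\in C$ is the set of $h$ such that there exist $\alpha_n\downarrow0$ ($\alpha_n>0$) and $h_n\to h$ with $x+\alpha_nh_n\in C$. Robinson's constraint qualification holds at feasible $x_*$ if $0\in\operatorname{int}\{G(x_* )+DG(x_* )(A-x_* )-K\}$. The first order growth condition holds at a feasible $x_*$ if there exist $\rho>0$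 and a neighbourhood $\mathcal{O}$ of $x_*$ with $F(x)\ge F(x_* )+\rho|x-x_*|$ for all $x\in\mathcal{O}\cap\Omega$. *)

theory Defs
  imports "HOL-Analysis.Analysis"
begin

definition contingent_cone :: "'a::real_normed_vector set \<Rightarrow> 'a \<Rightarrow> 'a set" where
  "contingent_cone C x = {h. \<exists>\<alpha> hs. (\<forall>n. \<alpha> n > 0) \<and> decseq \<alpha> \<and> \<alpha> \<longlonglongrightarrow> 0 \<and>
        hs \<longlonglongrightarrow> h \<and> (\<forall>n. x + \<alpha> n *\<^sub>R hs n \<in> C)}"

text \<open>Max function F(x) = max over W of f(x,w) (W compact, nonempty: the sup is attained).\<close>
definition maxfun :: "('a \<Rightarrow> 'w \<Rightarrow> real) \<Rightarrow> 'w set \<Rightarrow> 'a \<Rightarrow> real" where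
  "maxfun f Ws x = (SUP \<omega>\<in>Ws. f x \<omega>)"

definition active_set :: "('a \<Rightarrow> 'w \<Rightarrow> real) \<Rightarrow> 'w set \<Rightarrow> 'a \<Rightarrow> 'w set" where
  "active_set f Ws x = {\<omega> \<in> Ws. f x \<omega> = maxfun f Ws x}"

definition feasible_set :: "'a set \<Rightarrow> ('a \<Rightarrow> 'b) \<Rightarrow> 'b set \<Rightarrow> 'a set" where
  "feasible_set A G K = {x \<in> A. G x \<in> K}"

definition robinson_cq :: "'a::real_normed_vector set \<Rightarrow> ('a \<Rightarrow> 'b::real_normed_vector) \<Rightarrow> ('a \<Rightarrow>\<^sub>L 'b) \<Rightarrow> 'b set \<Rightarrow> 'a \<Rightarrow> bool" where
  "robinson_cq A G DGx K x \<longleftrightarrow>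
     0 \<in> interior {G x + blinfun_apply DGx (a - x) - k | a k. a \<in> A \<and> k \<in> K}"

definition first_order_growth ::
  "('a::real_normed_vector \<Rightarrow> real) \<Rightarrow> 'a set \<Rightarrow> 'a \<Rightarrow> bool" where
  "first_order_growth F \<Omega> x \<longleftrightarrow>
     (\<exists>\<rho>>0. \<exists>U. open U \<and> x \<in> U \<and> (\<forall>y \<in> U \<inter> \<Omega>. F y \<ge> F x + \<rho> * norm (y - x)))"

end

theory Submission
  imports Defs
begin

lemma contingent_coneI:
  fixes C :: "'a::real_normed_vector set"
  assumes pos: "\<And>n. \<alpha> n > 0" and lim: "\<alpha> \<longlonglongrightarrow> 0" and hl: "hs \<longlonglongrightarrow> h"
    and mem: "\<And>n. x + \<alpha> n *\<^sub>R hs n \<in> C"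
  shows "h \<in> contingent_cone C x"
proof -
  obtain r where r: "strict_mono r" and mono: "monoseq (\<lambda>n. \<alpha> (r n))"
    using seq_monosub by blast
  have lim2: "(\<lambda>n. \<alpha> (r n)) \<longlonglongrightarrow> 0"
    using LIMSEQ_subseq_LIMSEQ[OF lim r] by (simp add: o_def)
  have dec: "decseq (\<lambda>n. \<alpha> (r n))"
  proof -
    { assume inc: "incseq (\<lambda>n. \<alpha> (r n))"
      have "\<alpha> (r 0) \<le> 0"
        using LIMSEQ_le_const[OF lim2, of "\<alpha> (r 0)"] inc by (auto simp: incseq_def)
      with pos have False by (meson not_le) }
    then show ?thesis using mono by (auto simp: monoseq_iff)
  qed
  have "(\<lambda>n. hs (r n)) \<longlonglongrightarrow> h"
    using LIMSEQ_subseq_LIMSEQ[OF hl r] by (simp add: o_def)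
  then show ?thesis unfolding contingent_cone_def
    using pos dec lim2 mem by (intro CollectI exI[of _ "\<lambda>n. \<alpha> (r n)"] exI[of _ "\<lambda>n. hs (r n)"]) auto
qed

lemma convex_tangent_approx:
  fixes C :: "'a::real_normed_vector set"
  assumes cvx: "convex C" and xC: "x \<in> C" and h: "h \<in> contingent_cone C x" and e: "e > 0"
  shows "\<exists>\<tau>>0. \<forall>t. 0 < t \<and> t \<le> \<tau> \<longrightarrow> (\<exists>c\<in>C. norm (c - (x + t *\<^sub>R h)) \<le> e * t)"
proof -
  obtain \<alpha> hs where pos: "\<forall>n. \<alpha> n > 0" and hl: "hs \<longlonglongrightarrow> h" and mem: "\<forall>n. x + \<alpha> n *\<^sub>R hs n \<in> C"
    using h unfolding contingent_cone_def by blast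
  obtain n where n: "dist (hs n) h < e"
    using hl e unfolding lim_sequentially by blast
  show ?thesis
  proof (intro exI[of _ "\<alpha> n"] conjI allI impI)
    show "\<alpha> n > 0" using pos by auto
    fix t assume t: "0 < t \<and> t \<le> \<alpha> n"
    let ?u = "t / \<alpha> n"
    have u: "0 \<le> ?u" "?u \<le> 1" using t pos by (auto simp: divide_le_eq_1)
    have "(1 - ?u) *\<^sub>R x + ?u *\<^sub>R (x + \<alpha> n *\<^sub>R hs n) \<in> C"
      using convexD_alt[OF cvx xC mem[rule_format, of n] u] by (simp add: algebra_simps)
    moreover have "(1 - ?u) *\<^sub>R x + ?u *\<^sub>R (x + \<alpha> n *\<^sub>R hs n) = x + t *\<^sub>R hs n"
      using pos[rule_format, of n] by (simp add: algebra_simps)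
    moreover have "norm ((x + t *\<^sub>R hs n) - (x + t *\<^sub>R h)) \<le> e * t"
    proof -
      have "norm ((x + t *\<^sub>R hs n) - (x + t *\<^sub>R h)) = t * norm (hs n - h)"
        using t by (simp add: scaleR_diff_right[symmetric])
      also have "\<dots> \<le> e * t" using n t by (simp add: dist_norm)
      finally show ?thesis .
    qed
    ultimately show "\<exists>c\<in>C. norm (c - (x + t *\<^sub>R h)) \<le> e * t" by metis
  qed
qed

lemma deriv_along_seq:
  fixes g :: "'a::real_normed_vector \<Rightarrow> 'b::real_normed_vector"
  assumes gd: "(g has_derivative D) (at x)" and pos: "\<And>n. t n > 0" and t0: "t \<longlonglongrightarrow> 0"
    and ul: "u \<longlonglongrightarrow> v"
  shows "(\<lambda>n. (1 / t n) *\<^sub>R (g (x + t n *\<^sub>R u n) - g x)) \<longlonglongrightarrow> D v"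
proof -
  have bl: "bounded_linear D" using gd by (simp add: has_derivative_at_alt)
  have Du: "(\<lambda>n. D (u n)) \<longlonglongrightarrow> D v"
    using bounded_linear.tendsto[OF bl ul] .
  obtain B where B0: "B > 0" "\<forall>n. norm (u n) \<le> B"
    using BseqE[OF convergent_imp_Bseq[OF convergentI[OF ul]]] by blast
  then have B: "B > 0" "\<And>n. norm (u n) \<le> B" by auto
  have r0: "(\<lambda>n. (1 / t n) *\<^sub>R (g (x + t n *\<^sub>R u n) - g x) - D (u n)) \<longlonglongrightarrow> 0"
  proof (rule LIMSEQ_I)
    fix e :: real assume e: "e > 0"
    obtain d where d: "d > 0" and dd: "\<And>y. norm (y - x) < d \<Longrightarrow> norm (g y - g x - D (y - x)) \<le> (e / (2*B)) * norm (y - x)"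
    proof -
      have "e / (2*B) > 0" using e B by simp
      then show ?thesis using gd that unfolding has_derivative_at_alt by blast
    qed
    have "(\<lambda>n. t n * B) \<longlonglongrightarrow> 0 * B" using t0 by (intro tendsto_intros)
    then obtain N where N: "\<And>n. n \<ge> N \<Longrightarrow> norm (t n * B) < d"
      using d unfolding lim_sequentially dist_norm by auto
    show "\<exists>N. \<forall>n\<ge>N. norm ((1 / t n) *\<^sub>R (g (x + t n *\<^sub>R u n) - g x) - D (u n) - 0) < e"
    proof (intro exI allI impI)
      fix n assume n: "n \<ge> N"
      have tn: "t n > 0" using pos by auto
      have nrm: "norm ((x + t n *\<^sub>R u n) - x) = t n * norm (u n)" using tn by simp
      have "t n * norm (u n) \<le> t n * B" using B tn by (simp add: mult_left_mono)
      also have "\<dots> < d" using N[OF n] tn B by simp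
      finally have lt: "norm ((x + t n *\<^sub>R u n) - x) < d" by (subst nrm)
      have eq: "(1 / t n) *\<^sub>R (g (x + t n *\<^sub>R u n) - g x) - D (u n)
          = (1 / t n) *\<^sub>R (g (x + t n *\<^sub>R u n) - g x - D ((x + t n *\<^sub>R u n) - x))"
        using tn by (simp add: linear_simps[OF bl] algebra_simps)
      have "norm ((1 / t n) *\<^sub>R (g (x + t n *\<^sub>R u n) - g x) - D (u n) - 0)
           = (1 / t n) * norm (g (x + t n *\<^sub>R u n) - g x - D ((x + t n *\<^sub>R u n) - x))"
        using tn by (simp only: eq diff_zero norm_scaleR) simp
      also have "\<dots> \<le> (1 / t n) * ((e / (2*B)) * (t n * norm (u n)))"
        using dd[OF lt] tn nrm by (intro mult_left_mono) auto
      also have "\<dots> = (e / (2*B)) * norm (u n)" using tn by simp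
      also have "\<dots> \<le> (e / (2*B)) * B" using B e by (intro mult_left_mono) auto
      also have "\<dots> < e" using B e by simp
      finally show "norm ((1 / t n) *\<^sub>R (g (x + t n *\<^sub>R u n) - g x) - D (u n) - 0) < e" .
    qed
  qed
  have "(\<lambda>n. ((1 / t n) *\<^sub>R (g (x + t n *\<^sub>R u n) - g x) - D (u n)) + D (u n)) \<longlonglongrightarrow> 0 + D v"
    using r0 Du by (intro tendsto_intros)
  then show ?thesis by simp
qed

lemma uniform_in_param:
  fixes \<phi> :: "'a::metric_space \<times> 'w::topological_space \<Rightarrow> 'c::metric_space"
  assumes cont: "continuous_on (UNIV \<times> Ws) \<phi>" and cpt: "compact Ws" and e: "e > 0"
  shows "\<exists>d>0. \<forall>y \<omega>. dist y x < d \<and> \<omega> \<in> Ws \<longrightarrow> dist (\<phi> (y, \<omega>)) (\<phi> (x, \<omega>)) < e"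
proof -
  let ?S = "UNIV \<times> Ws"
  let ?\<psi> = "\<lambda>p. dist (\<phi> p) (\<phi> (x, snd p))"
  have c2: "continuous_on ?S (\<lambda>p. \<phi> (x, snd p))"
    by (rule continuous_on_compose2[OF cont]) (auto intro!: continuous_intros)
  have "continuous_on ?S ?\<psi>" using cont c2 by (intro continuous_intros)
  then obtain Op where O: "open Op" "Op \<inter> ?S = ?\<psi> -` {..<e} \<inter> ?S"
    using continuous_on_open_invariant[of ?S ?\<psi>] by (meson open_lessThan)
  have "{x} \<times> Ws \<subseteq> Op" using O(2) e by auto
  then obtain X0 where X0: "x \<in> X0" "open X0" "X0 \<times> Ws \<subseteq> Op"
    using Elementary_Topology.tube_lemma[OF cpt O(1)] by blast
  obtain d where d: "d > 0" "ball x d \<subseteq> X0" using X0 open_contains_ball by blast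
  show ?thesis
  proof (intro exI[of _ d] conjI allI impI)
    fix y \<omega> assume a: "dist y x < d \<and> \<omega> \<in> Ws"
    then have "(y, \<omega>) \<in> Op \<inter> ?S" using d X0 by (auto simp: dist_commute)
    then show "dist (\<phi> (y, \<omega>)) (\<phi> (x, \<omega>)) < e" using O(2) by auto
  qed (use d in auto)
qed

lemma unif_deriv:
  fixes f :: "'a::euclidean_space \<Rightarrow> 'w::topological_space \<Rightarrow> real" and fx :: "'a \<Rightarrow> 'w \<Rightarrow> 'a"
  assumes f_diff: "\<And>x \<omega>. \<omega> \<in> Ws \<Longrightarrow> ((\<lambda>y. f y \<omega>) has_derivative (\<lambda>h. fx x \<omega> \<bullet> h)) (at x)"
    and fx_cont: "continuous_on (UNIV \<times> Ws) (\<lambda>(x, \<omega>). fx x \<omega>)" and cpt: "compact Ws" and e: "e > 0"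
  shows "\<exists>d>0. \<forall>y \<omega>. norm (y - x0) < d \<and> \<omega> \<in> Ws \<longrightarrow>
            \<bar>f y \<omega> - f x0 \<omega> - fx x0 \<omega> \<bullet> (y - x0)\<bar> \<le> e * norm (y - x0)"
proof -
  obtain d where d: "d > 0" and dd: "\<And>y \<omega>. dist y x0 < d \<Longrightarrow> \<omega> \<in> Ws \<Longrightarrow> dist (fx y \<omega>) (fx x0 \<omega>) < e"
    using uniform_in_param[OF fx_cont cpt e, of x0] by auto
  show ?thesis
  proof (intro exI[of _ d] conjI allI impI)
    fix y \<omega> assume a: "norm (y - x0) < d \<and> \<omega> \<in> Ws"
    let ?S = "ball x0 d"
    have "norm ((\<lambda>y. f y \<omega>) y - (\<lambda>y. f y \<omega>) x0 - (\<lambda>h. fx x0 \<omega> \<bullet> h) (y - x0)) \<le> norm (y - x0) * e"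
    proof (rule differentiable_bound_linearization[where S = ?S and f' = "\<lambda>x h. fx x \<omega> \<bullet> h"])
      fix t :: real assume t: "t \<in> {0..1}"
      have "norm (x0 + t *\<^sub>R (y - x0) - x0) = t * norm (y - x0)" using t by simp
      also have "\<dots> \<le> norm (y - x0)" using t by (simp add: mult_left_le_one_le)
      finally show "x0 + t *\<^sub>R (y - x0) \<in> ?S" using a by (simp add: dist_norm norm_minus_commute)
    next
      fix x assume "x \<in> ?S"
      show "((\<lambda>y. f y \<omega>) has_derivative (\<lambda>h. fx x \<omega> \<bullet> h)) (at x within ?S)"
        using f_diff[of \<omega> x] a by (simp add: has_derivative_at_withinI)
    next
      fix x assume x: "x \<in> ?S"
      have "dist (fx x \<omega>) (fx x0 \<omega>) < e" using dd[of x \<omega>] x a by (simp add: dist_commute)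
      show "onorm ((\<lambda>h. fx x \<omega> \<bullet> h) - (\<lambda>h. fx x0 \<omega> \<bullet> h)) \<le> e"
      proof (rule onorm_le)
        fix h
        have "norm (((\<lambda>h. fx x \<omega> \<bullet> h) - (\<lambda>h. fx x0 \<omega> \<bullet> h)) h) = \<bar>(fx x \<omega> - fx x0 \<omega>) \<bullet> h\<bar>"
          by (simp add: inner_diff_left)
        also have "\<dots> \<le> norm (fx x \<omega> - fx x0 \<omega>) * norm h" by (rule Cauchy_Schwarz_ineq2)
        also have "\<dots> \<le> e * norm h"
          using \<open>dist (fx x \<omega>) (fx x0 \<omega>) < e\<close> by (intro mult_right_mono) (auto simp: dist_norm)
        finally show "norm (((\<lambda>h. fx x \<omega> \<bullet> h) - (\<lambda>h. fx x0 \<omega> \<bullet> h)) h) \<le> e * norm h" .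
      qed
    next
      show "x0 \<in> ?S" using d by simp
    qed
    then show "\<bar>f y \<omega> - f x0 \<omega> - fx x0 \<omega> \<bullet> (y - x0)\<bar> \<le> e * norm (y - x0)"
      by (simp add: mult.commute)
  qed (use d in auto)
qed

lemma danskin_aux:
  fixes g \<phi> :: "'w::topological_space \<Rightarrow> real"
  assumes cpt: "compact Ws" and gc: "continuous_on Ws g" and pc: "continuous_on Ws \<phi>"
    and gle: "\<And>\<omega>. \<omega> \<in> Ws \<Longrightarrow> g \<omega> \<le> c"
    and act: "\<And>\<omega>. \<omega> \<in> Ws \<Longrightarrow> g \<omega> = c \<Longrightarrow> \<phi> \<omega> \<le> 0"
    and e: "e > 0"
  shows "\<exists>\<tau>>0. \<forall>t \<omega>. 0 < t \<and> t < \<tau> \<and> \<omega> \<in> Ws \<longrightarrow> g \<omega> + t * \<phi> \<omega> \<le> c + t * e"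
proof -
  let ?V = "{\<omega> \<in> Ws. \<phi> \<omega> \<ge> e}"
  have "closedin (top_of_set Ws) ?V"
    using continuous_closedin_preimage[OF pc closed_atLeast[of e]] by (simp add: vimage_def Int_def conj_commute)
  then have cV: "compact ?V" using closedin_compact cpt by blast
  obtain M where M: "\<And>\<omega>. \<omega> \<in> Ws \<Longrightarrow> \<phi> \<omega> \<le> M" "M \<ge> 0"
  proof -
    have "bounded (\<phi> ` Ws)" using compact_continuous_image[OF pc cpt] compact_imp_bounded by blast
    then obtain B where "\<forall>y\<in>\<phi> ` Ws. norm y \<le> B" unfolding bounded_iff by blast
    then show ?thesis using that[of "\<bar>B\<bar>"] by fastforce
  qed
  show ?thesis
  proof (cases "?V = {}")
    case True
    show ?thesis
    proof (intro exI[of _ 1] conjI allI impI)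
      fix t :: real and \<omega> assume a: "0 < t \<and> t < 1 \<and> \<omega> \<in> Ws"
      then have "\<phi> \<omega> < e" using True by auto
      then have "t * \<phi> \<omega> \<le> t * e" using a by (intro mult_left_mono) auto
      then show "g \<omega> + t * \<phi> \<omega> \<le> c + t * e" using gle[of \<omega>] a by linarith
    qed simp
  next
    case False
    obtain w0 where w0: "w0 \<in> ?V" "\<And>\<omega>. \<omega> \<in> ?V \<Longrightarrow> g \<omega> \<le> g w0"
      using continuous_attains_sup[OF cV False continuous_on_subset[OF gc]] by auto
    have "g w0 < c"
    proof -
      have "g w0 \<le> c" using gle w0 by auto
      moreover have "g w0 \<noteq> c" using act[of w0] w0 e by auto
      ultimately show ?thesis by simp
    qed
    define \<tau> where "\<tau> = (c - g w0) / (M + 1)"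
    have tau: "\<tau> > 0" using \<open>g w0 < c\<close> M by (simp add: \<tau>_def)
    show ?thesis
    proof (intro exI[of _ \<tau>] conjI allI impI tau)
      fix t :: real and \<omega> assume a: "0 < t \<and> t < \<tau> \<and> \<omega> \<in> Ws"
      show "g \<omega> + t * \<phi> \<omega> \<le> c + t * e"
      proof (cases "\<phi> \<omega> \<ge> e")
        case True
        then have gw: "g \<omega> \<le> g w0" using w0 a by auto
        have "t * \<phi> \<omega> \<le> t * M" using M a by (intro mult_left_mono) auto
        also have "\<dots> \<le> \<tau> * (M + 1)" using a M by (intro mult_mono) auto
        also have "\<dots> = c - g w0" using M by (simp add: \<tau>_def)
        finally have "t * \<phi> \<omega> \<le> c - g w0" .
        moreover have "t * e \<ge> 0" using a e by simp
        ultimately show ?thesis using gw by linarith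
      next
        case False
        then have "t * \<phi> \<omega> \<le> t * e" using a by (intro mult_left_mono) auto
        then show ?thesis using gle[of \<omega>] a by linarith
      qed
    qed
  qed
qed

definition Dset :: "'a::real_normed_vector set \<Rightarrow> 'b::real_normed_vector set \<Rightarrow> ('a \<Rightarrow>\<^sub>L 'b) \<Rightarrow> 'b \<Rightarrow> 'a \<Rightarrow> real \<Rightarrow> 'b set" where
  "Dset A K L g0 xs N = {g0 + blinfun_apply L (a - xs) - k | a k. a \<in> A \<and> norm (a - xs) \<le> N \<and> k \<in> K \<and> norm k \<le> N}"

lemma Dset_mono: "N \<le> M \<Longrightarrow> Dset A K L g0 xs N \<subseteq> Dset A K L g0 xs M"
  unfolding Dset_def by fastforce

lemma Dset_convex:
  assumes "convex A" "convex K"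
  shows "convex (Dset A K L g0 xs N)"
proof (rule convexI)
  fix y1 y2 :: 'b and u v :: real
  assume y1: "y1 \<in> Dset A K L g0 xs N" and y2: "y2 \<in> Dset A K L g0 xs N" and uv: "0 \<le> u" "0 \<le> v" "u + v = 1"
  obtain a1 k1 where 1: "y1 = g0 + L (a1 - xs) - k1" "a1 \<in> A" "norm (a1 - xs) \<le> N" "k1 \<in> K" "norm k1 \<le> N"
    using y1 unfolding Dset_def by blast
  obtain a2 k2 where 2: "y2 = g0 + L (a2 - xs) - k2" "a2 \<in> A" "norm (a2 - xs) \<le> N" "k2 \<in> K" "norm k2 \<le> N"
    using y2 unfolding Dset_def by blast
  have aA: "u *\<^sub>R a1 + v *\<^sub>R a2 \<in> A" using convexD[OF assms(1) 1(2) 2(2) uv] .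
  have kK: "u *\<^sub>R k1 + v *\<^sub>R k2 \<in> K" using convexD[OF assms(2) 1(4) 2(4) uv] .
  have na: "norm (u *\<^sub>R a1 + v *\<^sub>R a2 - xs) \<le> N"
  proof -
    have "u *\<^sub>R a1 + v *\<^sub>R a2 - xs = u *\<^sub>R (a1 - xs) + v *\<^sub>R (a2 - xs)"
      using uv by (simp add: algebra_simps flip: scaleR_add_left)
    then have "norm (u *\<^sub>R a1 + v *\<^sub>R a2 - xs) \<le> u * norm (a1 - xs) + v * norm (a2 - xs)"
      using uv norm_triangle_ineq[of "u *\<^sub>R (a1 - xs)" "v *\<^sub>R (a2 - xs)"] by simp
    also have "\<dots> \<le> u * N + v * N" using uv 1 2 by (intro add_mono mult_left_mono) auto
    finally show ?thesis using uv by (simp flip: distrib_right)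
  qed
  have nk: "norm (u *\<^sub>R k1 + v *\<^sub>R k2) \<le> N"
  proof -
    have "norm (u *\<^sub>R k1 + v *\<^sub>R k2) \<le> u * norm k1 + v * norm k2"
      using uv norm_triangle_ineq[of "u *\<^sub>R k1" "v *\<^sub>R k2"] by simp
    also have "\<dots> \<le> u * N + v * N" using uv 1 2 by (intro add_mono mult_left_mono) auto
    finally show ?thesis using uv by (simp flip: distrib_right)
  qed
  have "u *\<^sub>R y1 + v *\<^sub>R y2 = g0 + L ((u *\<^sub>R a1 + v *\<^sub>R a2) - xs) - (u *\<^sub>R k1 + v *\<^sub>R k2)"
  proof -
    have "u *\<^sub>R y1 + v *\<^sub>R y2 = (u + v) *\<^sub>R g0 + L (u *\<^sub>R (a1 - xs) + v *\<^sub>R (a2 - xs)) - (u *\<^sub>R k1 + v *\<^sub>R k2)"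
    proof -
      have "L (u *\<^sub>R (a1 - xs) + v *\<^sub>R (a2 - xs)) = u *\<^sub>R L (a1 - xs) + v *\<^sub>R L (a2 - xs)"
        by (simp add: blinfun.add_right blinfun.scaleR_right)
      then show ?thesis unfolding 1(1) 2(1) by (simp add: algebra_simps)
    qed
    also have "u *\<^sub>R (a1 - xs) + v *\<^sub>R (a2 - xs) = (u *\<^sub>R a1 + v *\<^sub>R a2) - xs"
      using uv by (simp add: algebra_simps flip: scaleR_add_left)
    finally show ?thesis using uv by simp
  qed
  then show "u *\<^sub>R y1 + v *\<^sub>R y2 \<in> Dset A K L g0 xs N"
    unfolding Dset_def using aA kK na nk by blast
qed

lemma Dset_closed:
  fixes A :: "'a::euclidean_space set" and K :: "'b::real_normed_vector set"
  assumes "closed A" "closed K"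
  shows "closed (Dset A K L g0 xs N)"
proof -
  let ?S = "(\<lambda>a. g0 + L (a - xs)) ` (A \<inter> cball xs N)"
  let ?T = "K \<inter> cball 0 N"
  have cS: "compact ?S"
  proof (rule compact_continuous_image)
    show "compact (A \<inter> cball xs N)" using closed_Int_compact[OF assms(1) compact_cball] .
    show "continuous_on (A \<inter> cball xs N) (\<lambda>a. g0 + L (a - xs))" by (intro continuous_intros)
  qed
  have "Dset A K L g0 xs N = (\<Union>x\<in> ?S. \<Union>y \<in> ?T. {x - y})"
    unfolding Dset_def by (auto simp: dist_norm norm_minus_commute) blast
  then show ?thesis
    using compact_closed_differences[OF cS] assms(2) by (simp add: closed_Int)
qed

lemma robinson_ball:
  fixes A :: "'a::euclidean_space set" and K :: "'b::banach set"
  assumes cA: "closed A" and vA: "convex A" and cK: "closed K" and vK: "convex K"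
    and rob: "0 \<in> interior {g0 + blinfun_apply L (a - xs) - k | a k. a \<in> A \<and> k \<in> K}"
  shows "\<exists>N \<eta>. N \<ge> 0 \<and> \<eta> > 0 \<and> ball 0 \<eta> \<subseteq> Dset A K L g0 xs N"
proof -
  let ?R = "{g0 + blinfun_apply L (a - xs) - k | a k. a \<in> A \<and> k \<in> K}"
  let ?D = "\<lambda>n::nat. Dset A K L g0 xs (real n)"
  have RU: "?R \<subseteq> \<Union> (range ?D)"
  proof
    fix y assume "y \<in> ?R"
    then obtain a k where ak: "y = g0 + L (a - xs) - k" "a \<in> A" "k \<in> K" by blast
    obtain n where n: "norm (a - xs) + norm k \<le> real n" using real_arch_simple by blast
    have "y \<in> ?D n" unfolding Dset_def using ak n
      using norm_ge_zero[of "a - xs"] norm_ge_zero[of k]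
      by (intro CollectI exI[of _ a] exI[of _ k]) (auto simp del: norm_ge_zero)
    then show "y \<in> \<Union> (range ?D)" by blast
  qed
  have "\<exists>n. interior (?D n) \<noteq> {}"
  proof (rule ccontr)
    assume "\<not> ?thesis"
    then have "euclidean interior_of \<Union> (range ?D) = {}"
      by (intro Baire_category_alt) (auto simp: completely_metrizable_space_euclidean
           Dset_closed[OF cA cK] simp flip: closed_closedin)
    then have "interior (\<Union> (range ?D)) = {}" by simp
    moreover have "0 \<in> interior (\<Union> (range ?D))" using rob interior_mono[OF RU] by blast
    ultimately show False by blast
  qed
  then obtain n y0 where "y0 \<in> interior (?D n)" by blast
  then obtain \<delta> where \<delta>: "\<delta> > 0" "ball y0 \<delta> \<subseteq> ?D n" using mem_interior by blast
  obtain \<epsilon>0 where \<epsilon>0: "\<epsilon>0 > 0" "ball 0 \<epsilon>0 \<subseteq> ?R" using rob mem_interior by blast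
  define lam where "lam = \<epsilon>0 / (2 * (norm y0 + 1))"
  have n2: "2 * (norm y0 + 1) > 0" by (smt (verit) norm_ge_zero)
  have lam: "lam > 0" unfolding lam_def using \<epsilon>0(1) n2 by (rule divide_pos_pos)
  have "norm (- (lam *\<^sub>R y0)) < \<epsilon>0"
  proof -
    have "norm (- (lam *\<^sub>R y0)) = \<epsilon>0 * norm y0 / (2 * (norm y0 + 1))"
      using lam \<epsilon>0(1) by (simp add: lam_def)
    also have "\<dots> < \<epsilon>0"
      using \<epsilon>0 n2 by (simp add: divide_less_eq)
    finally show ?thesis .
  qed
  then have "- (lam *\<^sub>R y0) \<in> ball 0 \<epsilon>0" by simp
  then have "- (lam *\<^sub>R y0) \<in> \<Union> (range ?D)" using \<epsilon>0(2) RU by blast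
  then obtain m where m: "- (lam *\<^sub>R y0) \<in> ?D m" by blast
  define N where "N = max (real n) (real m)"
  have DnN: "?D n \<subseteq> Dset A K L g0 xs N" "?D m \<subseteq> Dset A K L g0 xs N"
    by (auto intro!: Dset_mono simp: N_def)
  define \<eta> where "\<eta> = lam * \<delta> / (1 + lam)"
  have eta: "\<eta> > 0" using lam \<delta> by (simp add: \<eta>_def)
  have N0: "N \<ge> 0" by (simp add: N_def)
  have "ball 0 \<eta> \<subseteq> Dset A K L g0 xs N"
  proof
    fix z :: 'b assume z: "z \<in> ball 0 \<eta>"
    define p where "p = y0 + ((1 + lam) / lam) *\<^sub>R z"
    have "dist y0 p = ((1 + lam) / lam) * norm z" using lam by (simp add: p_def dist_norm)
    also have "\<dots> < ((1 + lam) / lam) * \<eta>" using z lam by (intro mult_strict_left_mono) auto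
    also have "\<dots> = \<delta>" using lam by (simp add: \<eta>_def)
    finally have "p \<in> ball y0 \<delta>" by simp
    then have pD: "p \<in> Dset A K L g0 xs N" using \<delta> DnN by blast
    have qD: "- (lam *\<^sub>R y0) \<in> Dset A K L g0 xs N" using m DnN by blast
    have "(lam / (1 + lam)) *\<^sub>R p + (1 / (1 + lam)) *\<^sub>R (- (lam *\<^sub>R y0)) \<in> Dset A K L g0 xs N"
    proof (rule convexD[OF Dset_convex[OF vA vK] pD qD])
      show "0 \<le> lam / (1 + lam)" "0 \<le> 1 / (1 + lam)" using lam by auto
      show "lam / (1 + lam) + 1 / (1 + lam) = 1" using lam by (simp add: add_divide_distrib[symmetric])
    qed
    moreover have "(lam / (1 + lam)) *\<^sub>R p + (1 / (1 + lam)) *\<^sub>R (- (lam *\<^sub>R y0)) = z"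
    proof -
      have "lam + lam * lam > 0" using lam by (simp add: add_pos_pos)
      then show ?thesis using lam by (simp add: p_def algebra_simps)
    qed
    ultimately have "z \<in> Dset A K L g0 xs N" by simp
    then show "z \<in> Dset A K L g0 xs N" .
  qed
  then show ?thesis using N0 eta by blast
qed

lemma open_at_base:
  fixes A :: "'a::real_normed_vector set" and K :: "'b::real_normed_vector set"
  assumes vA: "convex A" and vK: "convex K" and ball: "ball 0 \<eta> \<subseteq> Dset A K L g0 xs N"
    and eta: "\<eta> > 0" and N: "N \<ge> 0"
    and a0: "a0 \<in> A" "norm (a0 - xs) \<le> 1" and k0: "k0 \<in> K"
    and y0: "norm (g0 + L (a0 - xs) - k0) < \<eta> / 2"
    and y: "norm (y - (g0 + L (a0 - xs) - k0)) < \<eta> / 2"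
  shows "\<exists>a\<in>A. \<exists>k\<in>K. g0 + L (a - xs) - k = y \<and>
           norm (a - a0) \<le> (2 * (N + 1) / \<eta>) * norm (y - (g0 + L (a0 - xs) - k0))"
proof -
  define y0 where "y0 = g0 + L (a0 - xs) - k0"
  show ?thesis
  proof (cases "y = y0")
    case True
    then show ?thesis using a0 k0 by (auto simp: y0_def)
  next
    case False
    define lam where "lam = 2 * norm (y - y0) / \<eta>"
    have lam0: "lam > 0" using False eta by (simp add: lam_def)
    have lam1: "lam < 1" using y eta by (simp add: lam_def y0_def)
    define z where "z = y0 + (1 / lam) *\<^sub>R (y - y0)"
    have "norm z \<le> norm y0 + (1 / lam) * norm (y - y0)"
      unfolding z_def using lam0 norm_triangle_ineq[of y0 "(1 / lam) *\<^sub>R (y - y0)"] by simp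
    also have "(1 / lam) * norm (y - y0) = \<eta> / 2" using False eta by (simp add: lam_def)
    finally have "norm z < \<eta>" using y0 by (simp add: y0_def)
    then have "z \<in> Dset A K L g0 xs N" using ball by auto
    then obtain az kz where z: "z = g0 + L (az - xs) - kz" "az \<in> A" "norm (az - xs) \<le> N" "kz \<in> K"
      unfolding Dset_def by blast
    define a where "a = (1 - lam) *\<^sub>R a0 + lam *\<^sub>R az"
    define k where "k = (1 - lam) *\<^sub>R k0 + lam *\<^sub>R kz"
    have aA: "a \<in> A" unfolding a_def using convexD_alt[OF vA a0(1) z(2), of lam] lam0 lam1
      by (simp add: algebra_simps)
    have kK: "k \<in> K" unfolding k_def using convexD_alt[OF vK k0 z(4), of lam] lam0 lam1
      by (simp add: algebra_simps)
    have "g0 + L (a - xs) - k = (1 - lam) *\<^sub>R y0 + lam *\<^sub>R z"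
    proof -
      have "a - xs = (1 - lam) *\<^sub>R (a0 - xs) + lam *\<^sub>R (az - xs)"
        by (simp add: a_def algebra_simps)
      then have "L (a - xs) = (1 - lam) *\<^sub>R L (a0 - xs) + lam *\<^sub>R L (az - xs)"
        by (simp add: blinfun.add_right blinfun.scaleR_right)
      then show ?thesis unfolding y0_def z(1) k_def by (simp add: algebra_simps)
    qed
    also have "\<dots> = y" using lam0 by (simp add: z_def algebra_simps)
    finally have eq: "g0 + L (a - xs) - k = y" .
    have "norm (a - a0) = lam * norm (az - a0)"
    proof -
      have "a - a0 = lam *\<^sub>R (az - a0)" by (simp add: a_def algebra_simps)
      then show ?thesis using lam0 by simp
    qed
    also have "\<dots> \<le> lam * (N + 1)"
    proof -
      have "norm (az - a0) \<le> norm (az - xs) + norm (a0 - xs)"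
        using norm_triangle_ineq4[of "az - xs" "a0 - xs"] by simp
      then show ?thesis using z(3) a0(2) lam0 by (intro mult_left_mono) auto
    qed
    also have "\<dots> = (2 * (N + 1) / \<eta>) * norm (y - y0)" by (simp add: lam_def)
    finally show ?thesis using aA kK eq unfolding y0_def by blast
  qed
qed

lemma robinson_stability:
  fixes A :: "'a::euclidean_space set" and K :: "'b::banach set"
    and G :: "'a \<Rightarrow> 'b" and DG :: "'a \<Rightarrow> ('a \<Rightarrow>\<^sub>L 'b)"
  assumes cA: "closed A" and vA: "convex A" and cK: "closed K" and vK: "convex K"
    and G_diff: "\<And>x. (G has_derivative blinfun_apply (DG x)) (at x)"
    and DG_cont: "continuous_on UNIV DG"
    and xsA: "xs \<in> A" and xsK: "G xs \<in> K"
    and rob: "robinson_cq A G (DG xs) K xs"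
  shows "\<exists>C>0. \<exists>r>0. \<forall>a\<in>A. \<forall>k\<in>K. norm (a - xs) < r \<longrightarrow> norm (G a - k) < r \<longrightarrow>
            (\<exists>x\<in>A. G x \<in> K \<and> norm (x - a) \<le> C * norm (G a - k))"
proof -
  define g0 where "g0 = G xs"
  define L where "L = DG xs"
  obtain N \<eta> where N: "N \<ge> 0" and eta: "\<eta> > 0" and ballD: "ball 0 \<eta> \<subseteq> Dset A K L g0 xs N"
    using robinson_ball[OF cA vA cK vK, of g0 L xs] rob unfolding robinson_cq_def g0_def L_def by blast
  define C1 where "C1 = 2 * (N + 1) / \<eta>"
  have C1: "C1 > 0" using N eta by (simp add: C1_def)
  define \<epsilon>1 where "\<epsilon>1 = 1 / (8 * C1)"
  have e1: "\<epsilon>1 > 0" using C1 by (simp add: \<epsilon>1_def)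
  have e1eta: "\<epsilon>1 \<le> \<eta> / 16"
  proof -
    have "\<epsilon>1 = \<eta> / (16 * (N + 1))" using eta N by (simp add: \<epsilon>1_def C1_def)
    also have "\<dots> \<le> \<eta> / 16" using eta N by (simp add: divide_le_eq field_simps)
    finally show ?thesis .
  qed
  obtain \<rho>0 where \<rho>0: "\<rho>0 > 0" and \<rho>0c: "\<And>x. dist x xs < \<rho>0 \<Longrightarrow> dist (DG x) (DG xs) < \<epsilon>1"
    using DG_cont e1 unfolding continuous_on_iff by blast
  define \<rho>1 where "\<rho>1 = min \<rho>0 1"
  have r1: "\<rho>1 > 0" "\<rho>1 \<le> 1" "\<rho>1 \<le> \<rho>0" using \<rho>0 by (auto simp: \<rho>1_def)
  have lip: "norm (G x' - G x - L (x' - x)) \<le> \<epsilon>1 * norm (x' - x)"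
    if x: "norm (x - xs) < \<rho>1" and x': "norm (x' - xs) < \<rho>1" for x x'
  proof -
    let ?S = "ball xs \<rho>1"
    have "norm (G x' - G x - blinfun_apply (DG xs) (x' - x)) \<le> norm (x' - x) * \<epsilon>1"
    proof (rule differentiable_bound_linearization[where S = ?S and f' = "\<lambda>x. blinfun_apply (DG x)"])
      fix t :: real assume t: "t \<in> {0..1}"
      have "x + t *\<^sub>R (x' - x) = (1 - t) *\<^sub>R x + t *\<^sub>R x'" by (simp add: algebra_simps)
      moreover have "(1 - t) *\<^sub>R x + t *\<^sub>R x' \<in> ?S"
        using convexD_alt[OF convex_ball, of x xs \<rho>1 x' t] x x' t
        by (simp add: dist_norm norm_minus_commute)
      ultimately show "x + t *\<^sub>R (x' - x) \<in> ?S" by simp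
    next
      fix y assume "y \<in> ?S"
      show "(G has_derivative blinfun_apply (DG y)) (at y within ?S)"
        using G_diff by (rule has_derivative_at_withinI)
    next
      fix y assume y: "y \<in> ?S"
      have "onorm (blinfun_apply (DG y) - blinfun_apply (DG xs)) = norm (DG y - DG xs)"
        by (simp add: norm_blinfun.rep_eq fun_diff_def minus_blinfun.rep_eq)
      also have "\<dots> < \<epsilon>1" using \<rho>0c[of y] y r1 by (simp add: dist_norm norm_minus_commute)
      finally show "onorm (blinfun_apply (DG y) - blinfun_apply (DG xs)) \<le> \<epsilon>1" by simp
    next
      show "xs \<in> ?S" using r1 by simp
    qed
    then show ?thesis by (simp add: L_def mult.commute)
  qed
  define \<rho>2 where "\<rho>2 = \<rho>1 / 2"
  define r where "r = min (\<rho>1 / 2) (min (\<eta> / 8) (\<rho>2 / (10 * C1)))"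
  have r: "r > 0" using r1 eta C1 by (simp add: r_def \<rho>2_def)
  have K0: "K \<noteq> {}" using xsK by blast
  show ?thesis
  proof (rule exI[of _ "8 * C1"], intro conjI exI[of _ r] r ballI impI)
    show "8 * C1 > 0" using C1 by simp
    fix a k assume aA: "a \<in> A" and kK: "k \<in> K" and ar: "norm (a - xs) < r" and dr: "norm (G a - k) < r"
    define \<delta> where "\<delta> = norm (G a - k)"
    define S where "S = A \<inter> cball a \<rho>2"
    define \<psi> where "\<psi> = (\<lambda>x. infdist (G x) K + \<epsilon>1 * norm (x - a))"
    have cS: "compact S" unfolding S_def using closed_Int_compact[OF cA compact_cball] .
    have aS: "a \<in> S" using aA r1 by (simp add: S_def \<rho>2_def)
    have Gc: "continuous_on S G"
      by (rule continuous_at_imp_continuous_on) (use G_diff has_derivative_continuous in blast)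
    have psic: "continuous_on S \<psi>" unfolding \<psi>_def
      by (intro continuous_intros Gc)
    obtain xb where xbS: "xb \<in> S" and xbmin: "\<And>x. x \<in> S \<Longrightarrow> \<psi> xb \<le> \<psi> x"
      using continuous_attains_inf[OF cS _ psic] aS by blast
    have psia: "\<psi> a \<le> \<delta>" unfolding \<psi>_def \<delta>_def using infdist_le[OF kK, of "G a"] by (simp add: dist_norm)
    have psixb: "infdist (G xb) K + \<epsilon>1 * norm (xb - a) \<le> \<delta>"
      using xbmin[OF aS] psia by (simp add: \<psi>_def)
    have phixb: "infdist (G xb) K \<le> \<delta>" using psixb e1 by (smt (verit) mult_nonneg_nonneg norm_ge_zero)
    have xba: "norm (xb - a) \<le> 8 * C1 * \<delta>"
    proof -
      have "\<epsilon>1 * norm (xb - a) \<le> \<delta>" using psixb infdist_nonneg[of "G xb" K] by linarith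
      then have "norm (xb - a) \<le> \<delta> / \<epsilon>1" using e1 by (simp add: le_divide_eq mult.commute)
      also have "\<delta> / \<epsilon>1 = 8 * C1 * \<delta>" using C1 by (simp add: \<epsilon>1_def)
      finally show ?thesis .
    qed
    have xbA: "xb \<in> A" and xba2: "norm (xb - a) \<le> \<rho>2" using xbS by (auto simp: S_def dist_norm norm_minus_commute)
    have rle: "r \<le> \<rho>1 / 2" "r \<le> \<eta> / 8" "r \<le> \<rho>2 / (10 * C1)" by (auto simp: r_def)
    have xbxs: "norm (xb - xs) < \<rho>1"
    proof -
      have "norm (xb - xs) \<le> norm (xb - a) + norm (a - xs)" using norm_triangle_ineq[of "xb - a" "a - xs"] by simp
      then show ?thesis using xba2 ar rle by (simp add: \<rho>2_def)
    qed
    have phi0: "infdist (G xb) K = 0"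
    proof (rule ccontr)
      assume "infdist (G xb) K \<noteq> 0"
      then have phipos: "infdist (G xb) K > 0" using infdist_nonneg[of "G xb" K] by linarith
      define \<phi> where "\<phi> = infdist (G xb) K"
      have "(INF c\<in>K. dist (G xb) c) < 2 * \<phi>" using phipos infdist_notempty[OF K0] by (simp add: \<phi>_def)
      then obtain kb where kbK: "kb \<in> K" and kb: "norm (G xb - kb) < 2 * \<phi>"
        using cINF_less_iff[OF K0 bdd_belowI2[of K 0 "\<lambda>c. dist (G xb) c"]] by (auto simp: dist_norm)
      define ex where "ex = G xb - g0 - L (xb - xs)"
      have exn: "norm ex \<le> \<epsilon>1"
      proof -
        have "norm ex \<le> \<epsilon>1 * norm (xb - xs)" using lip[of xs xb] xbxs r1 by (simp add: ex_def g0_def)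
        also have "\<dots> \<le> \<epsilon>1 * 1" using xbxs r1 e1 by (intro mult_left_mono) auto
        finally show ?thesis by simp
      qed
      define y0 where "y0 = g0 + L (xb - xs) - kb"
      define y where "y = - ex"
      have y0eq: "y0 = (G xb - kb) - ex" by (simp add: y0_def ex_def)
      have phid: "\<phi> \<le> \<delta>" using phixb by (simp add: \<phi>_def)
      have dsmall: "\<delta> < \<eta> / 8" using dr rle by (simp add: \<delta>_def)
      have ny0: "norm y0 < \<eta> / 2"
      proof -
        have "norm y0 \<le> norm (G xb - kb) + norm ex" unfolding y0eq by (rule norm_triangle_ineq4)
        then show ?thesis using kb phid dsmall exn e1eta eta by linarith
      qed
      have yy0: "y - y0 = - (G xb - kb)" by (simp add: y_def y0eq)
      have nyy0: "norm (y - y0) < \<eta> / 2" unfolding yy0 norm_minus_cancel using kb phid dsmall eta by linarith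
      have xb1: "norm (xb - xs) \<le> 1" using xbxs r1 by simp
      obtain a' k' where a'A: "a' \<in> A" and k'K: "k' \<in> K" and eq: "g0 + L (a' - xs) - k' = y"
        and a'b: "norm (a' - xb) \<le> (2 * (N + 1) / \<eta>) * norm (y - y0)"
        using open_at_base[OF vA vK ballD eta N xbA xb1 kbK, of y] ny0 nyy0 unfolding y0_def by blast
      have a'xb: "norm (a' - xb) \<le> C1 * (2 * \<phi>)"
      proof -
        have "norm (a' - xb) \<le> C1 * norm (y - y0)" using a'b by (simp add: C1_def)
        also have "\<dots> \<le> C1 * (2 * \<phi>)" using C1 kb yy0 by (intro mult_left_mono) (auto simp: norm_minus_commute)
        finally show ?thesis .
      qed
      have a'a: "norm (a' - a) < \<rho>2"
      proof -
        have "norm (a' - a) \<le> norm (a' - xb) + norm (xb - a)" using norm_triangle_ineq[of "a' - xb" "xb - a"] by simp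
        also have "\<dots> \<le> C1 * (2 * \<delta>) + 8 * C1 * \<delta>" using a'xb xba phid C1 by (smt (verit) mult_left_mono)
        also have "\<dots> = 10 * C1 * \<delta>" by simp
        also have "\<dots> < 10 * C1 * (\<rho>2 / (10 * C1))" using dr rle C1 unfolding \<delta>_def
          by (intro mult_strict_left_mono) auto
        also have "\<dots> = \<rho>2" using C1 by simp
        finally show ?thesis .
      qed
      have a'S: "a' \<in> S" using a'A a'a by (simp add: S_def dist_norm norm_minus_commute)
      have a'xs: "norm (a' - xs) < \<rho>1"
      proof -
        have "norm (a' - xs) \<le> norm (a' - a) + norm (a - xs)" using norm_triangle_ineq[of "a' - a" "a - xs"] by simp
        then show ?thesis using a'a ar rle by (simp add: \<rho>2_def)
      qed
      have Gk': "G a' - k' = G a' - G xb - L (a' - xb)"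
      proof -
        have "k' = g0 + L (a' - xs) + ex" using eq by (simp add: y_def algebra_simps)
        moreover have "L (a' - xs) - L (xb - xs) = L (a' - xb)" by (simp add: blinfun.diff_right[symmetric])
        ultimately show ?thesis by (simp add: ex_def algebra_simps)
      qed
      have "infdist (G a') K \<le> \<epsilon>1 * norm (a' - xb)"
      proof -
        have "infdist (G a') K \<le> norm (G a' - k')" using infdist_le[OF k'K, of "G a'"] by (simp add: dist_norm)
        also have "\<dots> \<le> \<epsilon>1 * norm (a' - xb)" unfolding Gk' using lip[OF xbxs a'xs] .
        finally show ?thesis .
      qed
      moreover have "norm (a' - a) \<le> norm (a' - xb) + norm (xb - a)" using norm_triangle_ineq[of "a' - xb" "xb - a"] by simp
      ultimately have i1: "infdist (G a') K \<le> \<epsilon>1 * norm (a' - xb)"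
        and i2: "\<epsilon>1 * norm (a' - a) \<le> \<epsilon>1 * norm (a' - xb) + \<epsilon>1 * norm (xb - a)"
        using e1 by (auto simp flip: distrib_left intro: mult_left_mono)
      have i3: "\<epsilon>1 * norm (a' - xb) \<le> \<epsilon>1 * (C1 * (2 * \<phi>))" using a'xb e1 by (intro mult_left_mono) auto
      have i4: "\<epsilon>1 * (C1 * (2 * \<phi>)) = \<phi> / 4" using C1 by (simp add: \<epsilon>1_def)
      have "\<psi> a' \<le> \<phi> / 2 + \<epsilon>1 * norm (xb - a)"
        unfolding \<psi>_def using i1 i2 i3 i4 by linarith
      also have "\<dots> < \<psi> xb" using phipos by (simp add: \<psi>_def \<phi>_def)
      finally show False using xbmin[OF a'S] by simp
    qed
    have "G xb \<in> K" using in_closed_iff_infdist_zero[OF cK K0] phi0 by simp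
    then show "\<exists>x\<in>A. G x \<in> K \<and> norm (x - a) \<le> 8 * C1 * norm (G a - k)"
      using xbA xba by (auto simp: \<delta>_def)
  qed
qed

lemma param_cont:
  fixes f :: "'a::topological_space \<Rightarrow> 'w::topological_space \<Rightarrow> 'c::topological_space"
  assumes "continuous_on (UNIV \<times> Ws) (\<lambda>(x, \<omega>). f x \<omega>)"
  shows "continuous_on Ws (\<lambda>\<omega>. f y \<omega>)"
proof -
  have "continuous_on Ws ((\<lambda>(x, \<omega>). f x \<omega>) \<circ> (\<lambda>\<omega>. (y, \<omega>)))"
    by (rule continuous_on_compose[OF _ continuous_on_subset[OF assms]]) (auto intro!: continuous_intros)
  then show ?thesis by (simp add: o_def)
qed

lemma maxfun_props:
  fixes f :: "'a::topological_space \<Rightarrow> 'w::topological_space \<Rightarrow> real"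
  assumes fc: "continuous_on (UNIV \<times> Ws) (\<lambda>(x, \<omega>). f x \<omega>)" and cpt: "compact Ws" and ne: "Ws \<noteq> {}"
  shows maxfun_ge: "\<And>y \<omega>. \<omega> \<in> Ws \<Longrightarrow> f y \<omega> \<le> maxfun f Ws y"
    and maxfun_le: "\<And>y c. (\<And>\<omega>. \<omega> \<in> Ws \<Longrightarrow> f y \<omega> \<le> c) \<Longrightarrow> maxfun f Ws y \<le> c"
    and maxfun_att: "\<And>y. \<exists>\<omega>0\<in>Ws. f y \<omega>0 = maxfun f Ws y"
proof -
  have bdd: "bdd_above ((\<lambda>\<omega>. f y \<omega>) ` Ws)" for y
    by (rule bounded_imp_bdd_above[OF compact_imp_bounded[OF compact_continuous_image[OF param_cont[OF fc] cpt]]])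
  show "\<And>y \<omega>. \<omega> \<in> Ws \<Longrightarrow> f y \<omega> \<le> maxfun f Ws y"
    unfolding maxfun_def using bdd by (intro cSUP_upper)
  show "\<And>y c. (\<And>\<omega>. \<omega> \<in> Ws \<Longrightarrow> f y \<omega> \<le> c) \<Longrightarrow> maxfun f Ws y \<le> c"
    unfolding maxfun_def using ne by (intro cSUP_least) auto
  fix y
  obtain \<omega>0 where w0: "\<omega>0 \<in> Ws" "\<And>\<omega>. \<omega> \<in> Ws \<Longrightarrow> f y \<omega> \<le> f y \<omega>0"
    using continuous_attains_sup[OF cpt ne param_cont[OF fc]] by blast
  have "maxfun f Ws y = f y \<omega>0"
    unfolding maxfun_def using w0 bdd[of y] ne by (intro antisym cSUP_least cSUP_upper) auto
  then show "\<exists>\<omega>0\<in>Ws. f y \<omega>0 = maxfun f Ws y" using w0 by auto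
qed

lemma part1:
  fixes A :: "'a::euclidean_space set"
    and K :: "'b::banach set"
    and Ws :: "'w::t2_space set"
    and f :: "'a \<Rightarrow> 'w \<Rightarrow> real"
    and fx :: "'a \<Rightarrow> 'w \<Rightarrow> 'a"
    and G :: "'a \<Rightarrow> 'b"
    and DG :: "'a \<Rightarrow> ('a \<Rightarrow>\<^sub>L 'b)"
    and xs :: 'a
  assumes W_ne: "Ws \<noteq> {}" and W_compact: "compact Ws"
    and f_diff: "\<And>x \<omega>. \<omega> \<in> Ws \<Longrightarrow> ((\<lambda>y. f y \<omega>) has_derivative (\<lambda>h. fx x \<omega> \<bullet> h)) (at x)"
    and f_cont: "continuous_on (UNIV \<times> Ws) (\<lambda>(x, \<omega>). f x \<omega>)"
    and G_diff: "\<And>x. (G has_derivative blinfun_apply (DG x)) (at x)"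
    and H: "\<forall>h \<in> contingent_cone A xs - {0}.
         blinfun_apply (DG xs) h \<in> contingent_cone K (G xs) \<longrightarrow>
         (SUP \<omega>\<in>active_set f Ws xs. fx xs \<omega> \<bullet> h) > 0"
  shows "first_order_growth (maxfun f Ws) (feasible_set A G K) xs"
proof (rule ccontr)
  let ?F = "maxfun f Ws"
  let ?\<Omega> = "feasible_set A G K"
  assume ng: "\<not> first_order_growth ?F ?\<Omega> xs"
  have "\<forall>n. \<exists>y. y \<in> ball xs (inverse (real (Suc n))) \<and> y \<in> ?\<Omega> \<and>
            ?F y < ?F xs + inverse (real (Suc n)) * norm (y - xs)"
  proof
    fix n
    have "inverse (real (Suc n)) > 0" by simp
    then show "\<exists>y. y \<in> ball xs (inverse (real (Suc n))) \<and> y \<in> ?\<Omega> \<and>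
            ?F y < ?F xs + inverse (real (Suc n)) * norm (y - xs)"
    proof -
      have "\<not> (\<forall>z\<in>ball xs (inverse (real (Suc n))) \<inter> ?\<Omega>. ?F xs + inverse (real (Suc n)) * norm (z - xs) \<le> ?F z)"
        using ng \<open>inverse (real (Suc n)) > 0\<close> unfolding first_order_growth_def
        using open_ball centre_in_ball by blast
      then show ?thesis by (auto simp: not_le)
    qed
  qed
  then obtain y where yb: "\<And>n. y n \<in> ball xs (inverse (real (Suc n)))" and yO: "\<And>n. y n \<in> ?\<Omega>"
     and yF: "\<And>n. ?F (y n) < ?F xs + inverse (real (Suc n)) * norm (y n - xs)"
    by metis
  define t where "t = (\<lambda>n. norm (y n - xs))"
  have tpos: "t n > 0" for n
  proof -
    have "y n \<noteq> xs" using yF[of n] by auto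
    then show ?thesis by (simp add: t_def)
  qed
  have tle: "t n \<le> inverse (real (Suc n))" for n
    using yb[of n] by (simp add: t_def dist_norm norm_minus_commute)
  have ev1: "eventually (\<lambda>n. 0 \<le> t n) sequentially"
    using tpos by (intro always_eventually allI less_imp_le)
  have ev2: "eventually (\<lambda>n. t n \<le> inverse (real (Suc n))) sequentially"
    using tle by (intro always_eventually allI)
  have t0: "t \<longlonglongrightarrow> 0"
    by (rule tendsto_sandwich[OF ev1 ev2 tendsto_const LIMSEQ_inverse_real_of_nat])
  define u where "u = (\<lambda>n. (1 / t n) *\<^sub>R (y n - xs))"
  have usph: "u n \<in> sphere 0 1" for n using tpos[of n] by (simp add: u_def t_def)
  obtain h r where hS: "h \<in> sphere (0::'a) 1" and r: "strict_mono r" and ur: "(u \<circ> r) \<longlonglongrightarrow> h"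
  proof -
    have sc: "seq_compact (sphere (0::'a) 1)" by (rule compact_imp_seq_compact[OF compact_sphere])
    have "\<forall>n. u n \<in> sphere 0 1" using usph by blast
    from seq_compactE[OF sc this] show ?thesis using that by blast
  qed
  define \<alpha> where "\<alpha> = (\<lambda>n. t (r n))"
  define hs where "hs = (\<lambda>n. u (r n))"
  have apos: "\<alpha> n > 0" for n using tpos by (simp add: \<alpha>_def)
  have a0: "\<alpha> \<longlonglongrightarrow> 0" using LIMSEQ_subseq_LIMSEQ[OF t0 r] by (simp add: \<alpha>_def o_def)
  have hsl: "hs \<longlonglongrightarrow> h" using ur by (simp add: hs_def o_def)
  have yeq: "xs + \<alpha> n *\<^sub>R hs n = y (r n)" for n
    using tpos[of "r n"] by (simp add: \<alpha>_def hs_def u_def)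
  have h0: "h \<noteq> 0" using hS by auto
  have hA: "h \<in> contingent_cone A xs"
    by (rule contingent_coneI[OF apos a0 hsl]) (use yeq yO in \<open>auto simp: feasible_set_def\<close>)
  have Gl: "(\<lambda>n. (1 / \<alpha> n) *\<^sub>R (G (xs + \<alpha> n *\<^sub>R hs n) - G xs)) \<longlonglongrightarrow> DG xs h"
    by (rule deriv_along_seq[OF G_diff apos a0 hsl])
  have hK: "DG xs h \<in> contingent_cone K (G xs)"
  proof (rule contingent_coneI[OF apos a0 Gl])
    fix n
    have "G xs + \<alpha> n *\<^sub>R ((1 / \<alpha> n) *\<^sub>R (G (xs + \<alpha> n *\<^sub>R hs n) - G xs)) = G (y (r n))"
      using apos[of n] yeq[of n] by simp
    then show "G xs + \<alpha> n *\<^sub>R ((1 / \<alpha> n) *\<^sub>R (G (xs + \<alpha> n *\<^sub>R hs n) - G xs)) \<in> K"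
      using yO[of "r n"] by (simp add: feasible_set_def)
  qed
  have pos: "(SUP \<omega>\<in>active_set f Ws xs. fx xs \<omega> \<bullet> h) > 0"
    using H hA hK h0 by blast
  obtain \<omega>0 where w0: "\<omega>0 \<in> Ws" "f xs \<omega>0 = ?F xs"
    using maxfun_att[OF f_cont W_compact W_ne] by blast
  have "(SUP \<omega>\<in>active_set f Ws xs. fx xs \<omega> \<bullet> h) \<le> 0"
  proof (rule cSUP_least)
    show "active_set f Ws xs \<noteq> {}" using w0 by (auto simp: active_set_def)
    fix \<omega> assume w: "\<omega> \<in> active_set f Ws xs"
    then have wW: "\<omega> \<in> Ws" and wF: "f xs \<omega> = ?F xs" by (auto simp: active_set_def)
    define q where "q = (\<lambda>n. (1 / \<alpha> n) *\<^sub>R (f (xs + \<alpha> n *\<^sub>R hs n) \<omega> - f xs \<omega>))"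
    have ql: "q \<longlonglongrightarrow> fx xs \<omega> \<bullet> h"
      unfolding q_def by (rule deriv_along_seq[OF f_diff[OF wW] apos a0 hsl])
    have qle: "q n \<le> inverse (real (Suc n))" for n
    proof -
      have "f (y (r n)) \<omega> \<le> ?F (y (r n))" using maxfun_ge[OF f_cont W_compact W_ne wW] .
      also have "\<dots> < ?F xs + inverse (real (Suc (r n))) * \<alpha> n" using yF[of "r n"] by (simp add: \<alpha>_def t_def)
      finally have "f (y (r n)) \<omega> - f xs \<omega> < inverse (real (Suc (r n))) * \<alpha> n" using wF by simp
      then have "q n < inverse (real (Suc (r n)))"
        using apos[of n] yeq[of n] by (simp add: q_def divide_less_eq mult.commute)
      also have "\<dots> \<le> inverse (real (Suc n))" using seq_suble[OF r, of n] by (simp add: le_imp_inverse_le)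
      finally show ?thesis by simp
    qed
    show "fx xs \<omega> \<bullet> h \<le> 0"
      using LIMSEQ_le[OF ql LIMSEQ_inverse_real_of_nat] qle by auto
  qed
  then show False using pos by simp
qed

lemma part2:
  fixes A :: "'a::euclidean_space set"
    and K :: "'b::banach set"
    and Ws :: "'w::t2_space set"
    and f :: "'a \<Rightarrow> 'w \<Rightarrow> real"
    and fx :: "'a \<Rightarrow> 'w \<Rightarrow> 'a"
    and G :: "'a \<Rightarrow> 'b"
    and DG :: "'a \<Rightarrow> ('a \<Rightarrow>\<^sub>L 'b)"
    and xs :: 'a
  assumes A_closed: "closed A" and A_convex: "convex A"
    and K_closed: "closed K" and K_convex: "convex K"
    and W_ne: "Ws \<noteq> {}" and W_compact: "compact Ws"
    and f_diff: "\<And>x \<omega>. \<omega> \<in> Ws \<Longrightarrow> ((\<lambda>y. f y \<omega>) has_derivative (\<lambda>h. fx x \<omega> \<bullet> h)) (at x)"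
    and f_cont: "continuous_on (UNIV \<times> Ws) (\<lambda>(x, \<omega>). f x \<omega>)"
    and fx_cont: "continuous_on (UNIV \<times> Ws) (\<lambda>(x, \<omega>). fx x \<omega>)"
    and G_diff: "\<And>x. (G has_derivative blinfun_apply (DG x)) (at x)"
    and DG_cont: "continuous_on UNIV DG"
    and xs_feas: "xs \<in> feasible_set A G K"
    and growth: "first_order_growth (maxfun f Ws) (feasible_set A G K) xs"
    and rob: "robinson_cq A G (DG xs) K xs"
    and hA: "h \<in> contingent_cone A xs" and h0: "h \<noteq> 0"
    and hK: "blinfun_apply (DG xs) h \<in> contingent_cone K (G xs)"
  shows "(SUP \<omega>\<in>active_set f Ws xs. fx xs \<omega> \<bullet> h) > 0"
proof (rule ccontr)
  let ?F = "maxfun f Ws"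
  let ?\<Omega> = "feasible_set A G K"
  define g0 where "g0 = G xs"
  define L where "L = DG xs"
  assume "\<not> ?thesis"
  then have Sle: "(SUP \<omega>\<in>active_set f Ws xs. fx xs \<omega> \<bullet> h) \<le> 0" by simp
  have xsA: "xs \<in> A" and xsK: "G xs \<in> K" using xs_feas by (auto simp: feasible_set_def)
  obtain \<rho> U where rho: "\<rho> > 0" and U: "open U" "xs \<in> U"
    and grow: "\<And>y. y \<in> U \<inter> ?\<Omega> \<Longrightarrow> ?F y \<ge> ?F xs + \<rho> * norm (y - xs)"
    using growth unfolding first_order_growth_def by blast
  obtain C r where C: "C > 0" and r: "r > 0"
    and stab: "\<And>a k. a \<in> A \<Longrightarrow> k \<in> K \<Longrightarrow> norm (a - xs) < r \<Longrightarrow> norm (G a - k) < r \<Longrightarrow>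
            (\<exists>x\<in>A. G x \<in> K \<and> norm (x - a) \<le> C * norm (G a - k))"
    using robinson_stability[OF A_closed A_convex K_closed K_convex G_diff DG_cont xsA xsK rob] by blast
  define \<phi> where "\<phi> = (\<lambda>\<omega>. fx xs \<omega> \<bullet> h)"
  have phic: "continuous_on Ws \<phi>" unfolding \<phi>_def
    by (intro continuous_intros param_cont[OF fx_cont])
  obtain M where M: "M \<ge> 0" "\<And>\<omega>. \<omega> \<in> Ws \<Longrightarrow> norm (fx xs \<omega>) \<le> M"
  proof -
    have "bounded ((\<lambda>\<omega>. fx xs \<omega>) ` Ws)"
      by (rule compact_imp_bounded[OF compact_continuous_image[OF param_cont[OF fx_cont] W_compact]])
    then obtain B where "\<forall>y\<in>(\<lambda>\<omega>. fx xs \<omega>) ` Ws. norm y \<le> B" unfolding bounded_iff by blast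
    then show ?thesis using that[of "\<bar>B\<bar>"] by fastforce
  qed
  have bddphi: "bdd_above (\<phi> ` active_set f Ws xs)"
  proof -
    have "bounded (\<phi> ` Ws)" by (rule compact_imp_bounded[OF compact_continuous_image[OF phic W_compact]])
    then have "bdd_above (\<phi> ` Ws)" by (rule bounded_imp_bdd_above)
    then show ?thesis by (rule bdd_above_mono) (auto simp: active_set_def)
  qed
  have act: "\<phi> \<omega> \<le> 0" if "\<omega> \<in> Ws" "f xs \<omega> = ?F xs" for \<omega>
  proof -
    have "\<omega> \<in> active_set f Ws xs" using that by (simp add: active_set_def)
    then have "\<phi> \<omega> \<le> (SUP \<omega>\<in>active_set f Ws xs. \<phi> \<omega>)" using bddphi by (rule cSUP_upper)
    then show ?thesis using Sle by (simp add: \<phi>_def)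
  qed
  define s where "s = norm h"
  have s: "s > 0" using h0 by (simp add: s_def)
  define nL where "nL = norm L"
  have nL: "nL \<ge> 0" by (simp add: nL_def)
  define B where "B = s + 2 + nL"
  have B: "B > 0" using s nL by (simp add: B_def)
  define P where "P = 1 + C * B"
  have P: "P \<ge> 1" using C B by (simp add: P_def)
  define Q where "Q = 2 + s + (M + \<rho>) * P"
  have Q: "Q > 0" using s M rho P by (simp add: Q_def add_pos_nonneg)
  define e where "e = min (1 / P) (\<rho> * s / (2 * Q))"
  have e: "e > 0" using P rho s Q by (simp add: e_def)
  have eP: "e * P \<le> 1" using P by (simp add: e_def min_def field_simps split: if_splits)
  have e1: "e \<le> 1"
  proof -
    have "e \<le> e * P" using e P by simp
    then show ?thesis using eP by simp
  qed
  have eQ: "e * Q \<le> \<rho> * s / 2"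
  proof -
    have "e \<le> \<rho> * s / (2 * Q)" by (simp add: e_def)
    then have "e * Q \<le> \<rho> * s / (2 * Q) * Q" using Q by (intro mult_right_mono) auto
    then show ?thesis using Q by simp
  qed
  obtain \<tau>1 where t1: "\<tau>1 > 0" and t1P: "\<And>t. 0 < t \<Longrightarrow> t \<le> \<tau>1 \<Longrightarrow> \<exists>c\<in>A. norm (c - (xs + t *\<^sub>R h)) \<le> e * t"
    using convex_tangent_approx[OF A_convex xsA hA e] by blast
  obtain \<tau>2 where t2: "\<tau>2 > 0" and t2P: "\<And>t. 0 < t \<Longrightarrow> t \<le> \<tau>2 \<Longrightarrow> \<exists>c\<in>K. norm (c - (g0 + t *\<^sub>R L h)) \<le> e * t"
    using convex_tangent_approx[OF K_convex xsK hK e] unfolding g0_def L_def by blast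
  obtain d3 where d3: "d3 > 0" and d3P: "\<And>y. norm (y - xs) < d3 \<Longrightarrow> norm (G y - g0 - L (y - xs)) \<le> e * norm (y - xs)"
    using G_diff[of xs] e unfolding has_derivative_at_alt g0_def L_def by blast
  obtain d5 where d5: "d5 > 0" and d5P: "\<And>y \<omega>. norm (y - xs) < d5 \<Longrightarrow> \<omega> \<in> Ws \<Longrightarrow>
            \<bar>f y \<omega> - f xs \<omega> - fx xs \<omega> \<bullet> (y - xs)\<bar> \<le> e * norm (y - xs)"
    using unif_deriv[OF f_diff fx_cont W_compact e, of xs] by blast
  obtain \<tau>6 where t6: "\<tau>6 > 0" and t6P: "\<And>t \<omega>. 0 < t \<Longrightarrow> t < \<tau>6 \<Longrightarrow> \<omega> \<in> Ws \<Longrightarrow> f xs \<omega> + t * \<phi> \<omega> \<le> ?F xs + t * e"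
    using danskin_aux[OF W_compact param_cont[OF f_cont] phic maxfun_ge[OF f_cont W_compact W_ne] act e] by blast
  obtain dU where dU: "dU > 0" "ball xs dU \<subseteq> U" using U open_contains_ball by blast
  define t where "t = min \<tau>1 (min \<tau>2 (min \<tau>6 (min (d3 / (s + 1)) (min (d5 / (s + 1)) (min (dU / (s + 1)) (r / B)))))) / 2"
  have tpos: "t > 0" using t1 t2 t6 d3 d5 dU r B s unfolding t_def by simp
  have tb: "t \<le> \<tau>1" "t \<le> \<tau>2" "t < \<tau>6" "t * (s + 1) < d3" "t * (s + 1) < d5" "t * (s + 1) < dU" "t * B < r"
  proof -
    let ?m = "min \<tau>1 (min \<tau>2 (min \<tau>6 (min (d3 / (s + 1)) (min (d5 / (s + 1)) (min (dU / (s + 1)) (r / B))))))"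
    have m: "?m > 0" using t1 t2 t6 d3 d5 dU r B s by simp
    have "t = ?m / 2" by (simp only: t_def)
    then have tm: "t < ?m" using m by linarith
    show "t \<le> \<tau>1" "t \<le> \<tau>2" "t < \<tau>6" using tm by linarith+
    have "t < d3 / (s + 1)" "t < d5 / (s + 1)" "t < dU / (s + 1)" "t < r / B" using tm by linarith+
    then show "t * (s + 1) < d3" "t * (s + 1) < d5" "t * (s + 1) < dU" "t * B < r"
      using s B by (simp_all add: less_divide_eq)
  qed
  obtain a where aA: "a \<in> A" and a: "norm (a - (xs + t *\<^sub>R h)) \<le> e * t" using t1P[OF tpos tb(1)] by blast
  obtain k where kK: "k \<in> K" and k: "norm (k - (g0 + t *\<^sub>R L h)) \<le> e * t" using t2P[OF tpos tb(2)] by blast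
  have axs: "norm (a - xs) \<le> t * (s + 1)"
  proof -
    have "norm (a - xs) \<le> norm (a - (xs + t *\<^sub>R h)) + norm (t *\<^sub>R h)"
      using norm_triangle_ineq[of "a - (xs + t *\<^sub>R h)" "t *\<^sub>R h"] by (simp add: algebra_simps)
    also have "\<dots> \<le> e * t + t * s" using a tpos by (simp add: s_def)
    also have "\<dots> \<le> t * (s + 1)" using e1 tpos by (simp add: algebra_simps mult_right_le_one_le)
    finally show ?thesis .
  qed
  define \<delta> where "\<delta> = norm (G a - k)"
  have dle: "\<delta> \<le> e * t * B"
  proof -
    have eq: "G a - k = (G a - g0 - L (a - xs)) + L (a - (xs + t *\<^sub>R h)) + ((g0 + t *\<^sub>R L h) - k)"
      by (simp add: blinfun.diff_right blinfun.add_right blinfun.scaleR_right algebra_simps)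
    have n1: "norm (G a - g0 - L (a - xs)) \<le> e * (t * (s + 1))"
      using d3P[of a] axs tb(4) e by (smt (verit) mult_left_mono)
    have n2: "norm (L (a - (xs + t *\<^sub>R h))) \<le> nL * (e * t)"
      using norm_blinfun[of L "a - (xs + t *\<^sub>R h)"] a nL unfolding nL_def
      by (smt (verit) mult_left_mono)
    have n3: "norm ((g0 + t *\<^sub>R L h) - k) \<le> e * t" using k by (simp add: norm_minus_commute)
    have "\<delta> \<le> norm (G a - g0 - L (a - xs)) + norm (L (a - (xs + t *\<^sub>R h))) + norm ((g0 + t *\<^sub>R L h) - k)"
      unfolding \<delta>_def eq by (rule order_trans[OF norm_triangle_ineq add_right_mono[OF norm_triangle_ineq]])
    also have "\<dots> \<le> e * (t * (s + 1)) + nL * (e * t) + e * t" using n1 n2 n3 by linarith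
    also have "\<dots> = e * t * B" by (simp add: B_def algebra_simps)
    finally show ?thesis .
  qed
  have dr: "\<delta> < r"
  proof -
    have "e * t * B \<le> t * B" using e1 tpos B by (simp add: mult_right_le_one_le mult.assoc)
    then show ?thesis using dle tb(7) by linarith
  qed
  have ar: "norm (a - xs) < r"
  proof -
    have "t * (s + 1) \<le> t * B" using tpos nL by (intro mult_left_mono) (auto simp: B_def)
    then show ?thesis using axs tb(7) by linarith
  qed
  obtain x where xA: "x \<in> A" and xK: "G x \<in> K" and xa: "norm (x - a) \<le> C * \<delta>"
    using stab[OF aA kK ar] dr unfolding \<delta>_def by blast
  define E2 where "E2 = e * P"
  have xh: "norm (x - xs - t *\<^sub>R h) \<le> t * E2"
  proof -
    have "norm (x - xs - t *\<^sub>R h) \<le> norm (x - a) + norm (a - (xs + t *\<^sub>R h))"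
      using norm_triangle_ineq[of "x - a" "a - (xs + t *\<^sub>R h)"] by (simp add: algebra_simps)
    also have "\<dots> \<le> C * (e * t * B) + e * t" using xa dle a C by (smt (verit) mult_left_mono)
    also have "\<dots> = t * E2" by (simp add: E2_def P_def algebra_simps)
    finally show ?thesis .
  qed
  have E2le: "E2 \<le> 1" using eP by (simp add: E2_def)
  have xxs: "norm (x - xs) \<le> t * (s + 1)"
  proof -
    have "norm (x - xs) \<le> norm (x - xs - t *\<^sub>R h) + norm (t *\<^sub>R h)"
      using norm_triangle_ineq[of "x - xs - t *\<^sub>R h" "t *\<^sub>R h"] by simp
    also have "\<dots> \<le> t * E2 + t * s" using xh tpos by (simp add: s_def)
    also have "\<dots> \<le> t * (s + 1)" using E2le tpos by (simp add: algebra_simps)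
    finally show ?thesis .
  qed
  have xxs2: "norm (x - xs) \<ge> t * s - t * E2"
  proof -
    have "norm (t *\<^sub>R h) \<le> norm (x - xs) + norm (x - xs - t *\<^sub>R h)"
      using norm_triangle_ineq4[of "x - xs" "x - xs - t *\<^sub>R h"] by simp
    then show ?thesis using xh tpos by (simp add: s_def)
  qed
  have xU: "x \<in> U" using dU xxs tb(6) by (auto simp: dist_norm norm_minus_commute)
  have xO: "x \<in> ?\<Omega>" using xA xK by (simp add: feasible_set_def)
  have lower: "?F x \<ge> ?F xs + \<rho> * (t * s - t * E2)"
  proof -
    have "\<rho> * (t * s - t * E2) \<le> \<rho> * norm (x - xs)" using rho xxs2 by (intro mult_left_mono) auto
    then show ?thesis using grow[of x] xU xO by simp
  qed
  have upper: "?F x \<le> ?F xs + t * (e + M * E2 + e * (s + 1))"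
  proof (rule maxfun_le[OF f_cont W_compact W_ne])
    fix \<omega> assume w: "\<omega> \<in> Ws"
    have u1: "f x \<omega> \<le> f xs \<omega> + fx xs \<omega> \<bullet> (x - xs) + e * norm (x - xs)"
      using d5P[OF _ w, of x] xxs tb(5) by linarith
    have "fx xs \<omega> \<bullet> (x - xs) = t * \<phi> \<omega> + fx xs \<omega> \<bullet> (x - xs - t *\<^sub>R h)"
      by (simp add: \<phi>_def inner_diff_right)
    also have "fx xs \<omega> \<bullet> (x - xs - t *\<^sub>R h) \<le> M * (t * E2)"
    proof -
      have "fx xs \<omega> \<bullet> (x - xs - t *\<^sub>R h) \<le> norm (fx xs \<omega>) * norm (x - xs - t *\<^sub>R h)"
        by (rule norm_cauchy_schwarz)
      also have "\<dots> \<le> M * (t * E2)" using M(2)[OF w] M(1) xh by (intro mult_mono) auto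
      finally show ?thesis .
    qed
    finally have u2: "fx xs \<omega> \<bullet> (x - xs) \<le> t * \<phi> \<omega> + M * (t * E2)" by simp
    have u3: "f xs \<omega> + t * \<phi> \<omega> \<le> ?F xs + t * e" using t6P[OF tpos tb(3) w] .
    have u4: "e * norm (x - xs) \<le> e * (t * (s + 1))" using xxs e by (intro mult_left_mono) auto
    show "f x \<omega> \<le> ?F xs + t * (e + M * E2 + e * (s + 1))"
      using u1 u2 u3 u4 by (simp add: algebra_simps)
  qed
  have "\<rho> * (t * s - t * E2) \<le> t * (e + M * E2 + e * (s + 1))" using lower upper by linarith
  then have "t * (\<rho> * (s - E2)) \<le> t * (e + M * E2 + e * (s + 1))" by (simp add: algebra_simps)
  then have "\<rho> * (s - E2) \<le> e + M * E2 + e * (s + 1)" using tpos by simp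
  then have "\<rho> * s \<le> e * Q" by (simp add: Q_def E2_def algebra_simps)
  moreover have "\<rho> * s > 0" using rho s by simp
  ultimately show False using eQ by linarith
qed

theorem theorem2:
  fixes A :: "'a::euclidean_space set"
    and K :: "'b::banach set"
    and Ws :: "'w::t2_space set"
    and f :: "'a \<Rightarrow> 'w \<Rightarrow> real"
    and fx :: "'a \<Rightarrow> 'w \<Rightarrow> 'a"
    and G :: "'a \<Rightarrow> 'b"
    and DG :: "'a \<Rightarrow> ('a \<Rightarrow>\<^sub>L 'b)"
    and xs :: 'a
  assumes A_ne: "A \<noteq> {}" and A_closed: "closed A" and A_convex: "convex A"
    and K_ne: "K \<noteq> {}" and K_closed: "closed K" and K_convex: "convex K" and K_cone: "cone K"
    and W_ne: "Ws \<noteq> {}" and W_compact: "compact Ws"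
    and f_diff: "\<And>x \<omega>. \<omega> \<in> Ws \<Longrightarrow> ((\<lambda>y. f y \<omega>) has_derivative (\<lambda>h. fx x \<omega> \<bullet> h)) (at x)"
    and f_cont: "continuous_on (UNIV \<times> Ws) (\<lambda>(x, \<omega>). f x \<omega>)"
    and fx_cont: "continuous_on (UNIV \<times> Ws) (\<lambda>(x, \<omega>). fx x \<omega>)"
    and G_diff: "\<And>x. (G has_derivative blinfun_apply (DG x)) (at x)"
    and DG_cont: "continuous_on UNIV DG"
    and xs_feas: "xs \<in> feasible_set A G K"
  shows
    "((\<forall>h \<in> contingent_cone A xs - {0}.
         blinfun_apply (DG xs) h \<in> contingent_cone K (G xs) \<longrightarrow>
         (SUP \<omega>\<in>active_set f Ws xs. fx xs \<omega> \<bullet> h) > 0)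
       \<longrightarrow> first_order_growth (maxfun f Ws) (feasible_set A G K) xs)
     \<and>
     ((first_order_growth (maxfun f Ws) (feasible_set A G K) xs \<and> robinson_cq A G (DG xs) K xs)
       \<longrightarrow> (\<forall>h \<in> contingent_cone A xs - {0}.
         blinfun_apply (DG xs) h \<in> contingent_cone K (G xs) \<longrightarrow>
         (SUP \<omega>\<in>active_set f Ws xs. fx xs \<omega> \<bullet> h) > 0))"
proof (intro conjI impI)
  assume H: "\<forall>h \<in> contingent_cone A xs - {0}.
         blinfun_apply (DG xs) h \<in> contingent_cone K (G xs) \<longrightarrow>
         (SUP \<omega>\<in>active_set f Ws xs. fx xs \<omega> \<bullet> h) > 0"
  show "first_order_growth (maxfun f Ws) (feasible_set A G K) xs"
    by (rule part1[OF W_ne W_compact f_diff f_cont G_diff H])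
next
  assume a: "first_order_growth (maxfun f Ws) (feasible_set A G K) xs \<and> robinson_cq A G (DG xs) K xs"
  show "\<forall>h \<in> contingent_cone A xs - {0}.
         blinfun_apply (DG xs) h \<in> contingent_cone K (G xs) \<longrightarrow>
         (SUP \<omega>\<in>active_set f Ws xs. fx xs \<omega> \<bullet> h) > 0"
  proof (intro ballI impI)
    fix h assume h: "h \<in> contingent_cone A xs - {0}"
      and hK: "blinfun_apply (DG xs) h \<in> contingent_cone K (G xs)"
    show "(SUP \<omega>\<in>active_set f Ws xs. fx xs \<omega> \<bullet> h) > 0"
      using part2[OF A_closed A_convex K_closed K_convex W_ne W_compact f_diff f_cont fx_cont G_diff DG_cont
          xs_feas conjunct1[OF a] conjunct2[OF a], of h] h hK by blast
  qed
qed

end
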